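(* Let $X$ be a set, $B=(B,+,0)$ a unitary magma, $(A,k,q,s,p)$ a retraction point from $X$ to $B$, and $\varphi(x,b,x',b')=q\big((k(x)+s(b))+(k(x')+s(b'))\big)$. Write $0$ also for $q(0)\in X$ and set, for $x,x'\in X$, $b,b'\in B$: $x+_{b'}x'=\varphi(x,0,x',b')$, $\xi^{x}(b,x')=\varphi(x,b,x',0)$, $\xi_{b'}(b,x')=\varphi(0,b,x',b')$, $\rho^{b}_{b'}(x)=\varphi(x,b,0,b')$, $x+x'=\varphi(x,0,x',0)$, $\xi(b,x')=\varphi(0,b,x',0)$, $\rho_{b'}(x)=\varphi(x,0,0,b')$. Consider the following conditions, each required for all $x,x'\in X$, $b,b'\in B$, $a\in A$: (kks) $k(x)+(k(x')+s(b))=(k(x)+k(x'))+s(b)$; (sks) $s(b)+(k(x)+s(b'))=(s(b)+k(x))+s(b')$; (1ks) $a+(k(x)+s(b))=(a+k(x))+s(b)$; (kss) $k(x)+(s(b)+s(b'))=(k(x)+s(b))+s(b')$; (ksk) $k(x)+(s(b)+k(x'))=(k(x)+s(b))+k(x')$; (ks1) $k(x)+(s(b)+a)=(k(x)+s(b))+a$. Then, for all $x,x'\in X$ and $b,b'\in B$: 1. if (kks) holds, then $x+_{b'}x'=\rho_{b'}(x+x')$; 2. if (sks) holds, then $\xi_{b'}(b,x')=\rho^{b}_{b'}(\xi(b,x'))$; 3. if (1ks) holds, then $\varphi(x,b,x',b')=\rho^{b}_{b'}(\xi^{x}(b,x'))$; 4. if (kss) holds, then $\rho^{b}_{b'}(x)=\rho_{b+b'}(x)$;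 5. if (ksk) holds, then $\xi^{x}(b,x')=x+_{b}\xi(b,x')$; 6. if (ks1) holds, then $\varphi(x,b,x',b')=x+_{b+b'}\xi_{b'}(b,x')$; 7. if (kks) and (ksk) hold, then $\xi^{x}(b,x')=\rho_{b}(x+\xi(b,x'))$; 8. if (sks) and (kss) hold, then $\xi_{b'}(b,x')=\rho_{b+b'}(\xi(b,x'))$; 9. if (1ks), (kss) and (ksk) hold, then $\varphi(x,b,x',b')=\rho_{b+b'}(x+\xi(b,x'))$; 10. if (ks1), (kks) and (sks) hold, then $\varphi(x,b,x',b')=\rho_{b+b'}(x+\xi(b,x'))$.
   Context: A unitary magma is a set with a binary operation $+$ and an element $0$ with $b+0=b=0+b$ for all $b$; morphisms preserve $+$ and $0$. Given a set $X$ and a unitary magma $B$, a retraction point from $X$ to $B$ is a tuple $(A,k,q,s,p)$ where $A=(A,+,0)$ is a unitary magma, $k\colon X\to A$ and $q\colon A\to X$ are maps, $s\colon B\to A$ and $p\colon A\to B$ are morphisms of unitary magmas, and $p(s(b))=b$, $q(k(x))=x$, $p(k(x))=0$, $q(s(b))=q(0)$, and $k(q(a))+s(p(a))=a$ for all $x\in X$, $b\in B$, $a\in A$. *)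

theory Defs
  imports Main
begin

definition unitary_magma :: "('m \<Rightarrow> 'm \<Rightarrow> 'm) \<Rightarrow> 'm \<Rightarrow> bool" where
  "unitary_magma add z \<longleftrightarrow> (\<forall>b. add b z = b \<and> add z b = b)"

definition magma_morphism ::
  "('m \<Rightarrow> 'm \<Rightarrow> 'm) \<Rightarrow> 'm \<Rightarrow> ('n \<Rightarrow> 'n \<Rightarrow> 'n) \<Rightarrow> 'n \<Rightarrow> ('m \<Rightarrow> 'n) \<Rightarrow> bool" where
  "magma_morphism addM zM addN zN f \<longleftrightarrow>
     (\<forall>u v. f (addM u v) = addN (f u) (f v)) \<and> f zM = zN"

definition retraction_point ::
  "('b \<Rightarrow> 'b \<Rightarrow> 'b) \<Rightarrow> 'b \<Rightarrow> ('a \<Rightarrow> 'a \<Rightarrow> 'a) \<Rightarrow> 'a \<Rightarrow>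
   ('x \<Rightarrow> 'a) \<Rightarrow> ('a \<Rightarrow> 'x) \<Rightarrow> ('b \<Rightarrow> 'a) \<Rightarrow> ('a \<Rightarrow> 'b) \<Rightarrow> bool" where
  "retraction_point addB zB addA zA k q s p \<longleftrightarrow>
     unitary_magma addB zB \<and> unitary_magma addA zA \<and>
     magma_morphism addB zB addA zA s \<and> magma_morphism addA zA addB zB p \<and>
     (\<forall>b. p (s b) = b) \<and> (\<forall>x. q (k x) = x) \<and> (\<forall>x. p (k x) = zB) \<and>
     (\<forall>b. q (s b) = q zA) \<and> (\<forall>a. addA (k (q a)) (s (p a)) = a)"

definition phi ::
  "('a \<Rightarrow> 'a \<Rightarrow> 'a) \<Rightarrow> ('x \<Rightarrow> 'a) \<Rightarrow> ('a \<Rightarrow> 'x) \<Rightarrow> ('b \<Rightarrow> 'a) \<Rightarrow>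
   'x \<Rightarrow> 'b \<Rightarrow> 'x \<Rightarrow> 'b \<Rightarrow> 'x" where
  "phi addA k q s x b x' b' = q (addA (addA (k x) (s b)) (addA (k x') (s b')))"

end

theory Submission
  imports Defs
begin

theorem proposition6p1:
  fixes addB :: "'b \<Rightarrow> 'b \<Rightarrow> 'b" and zB :: 'b
    and addA :: "'a \<Rightarrow> 'a \<Rightarrow> 'a" and zA :: 'a
    and k :: "'x \<Rightarrow> 'a" and q :: "'a \<Rightarrow> 'x"
    and s :: "'b \<Rightarrow> 'a" and p :: "'a \<Rightarrow> 'b"
  assumes RP: "retraction_point addB zB addA zA k q s p"
  defines "\<phi> \<equiv> phi addA k q s"
  defines "kks \<equiv> \<forall>x x' b. addA (k x) (addA (k x') (s b)) = addA (addA (k x) (k x')) (s b)"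
    and "sks \<equiv> \<forall>x b b'. addA (s b) (addA (k x) (s b')) = addA (addA (s b) (k x)) (s b')"
    and "oneks \<equiv> \<forall>a x b. addA a (addA (k x) (s b)) = addA (addA a (k x)) (s b)"
    and "kss \<equiv> \<forall>x b b'. addA (k x) (addA (s b) (s b')) = addA (addA (k x) (s b)) (s b')"
    and "ksk \<equiv> \<forall>x b x'. addA (k x) (addA (s b) (k x')) = addA (addA (k x) (s b)) (k x')"
    and "ksone \<equiv> \<forall>x b a. addA (k x) (addA (s b) a) = addA (addA (k x) (s b)) a"
  defines "X0 \<equiv> q zA"
  defines "plusb \<equiv> \<lambda>x b' x'. \<phi> x zB x' b'"
    and "xiup \<equiv> \<lambda>x b x'. \<phi> x b x' zB"
    and "xidown \<equiv> \<lambda>b' b x'. \<phi> X0 b x' b'"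
    and "rhoud \<equiv> \<lambda>b b' x. \<phi> x b X0 b'"
    and "plusX \<equiv> \<lambda>x x'. \<phi> x zB x' zB"
    and "xi \<equiv> \<lambda>b x'. \<phi> X0 b x' zB"
    and "rho \<equiv> \<lambda>b' x. \<phi> x zB X0 b'"
  shows
    "(kks \<longrightarrow> (\<forall>x x' b'. plusb x b' x' = rho b' (plusX x x'))) \<and>
     (sks \<longrightarrow> (\<forall>x' b b'. xidown b' b x' = rhoud b b' (xi b x'))) \<and>
     (oneks \<longrightarrow> (\<forall>x x' b b'. \<phi> x b x' b' = rhoud b b' (xiup x b x'))) \<and>
     (kss \<longrightarrow> (\<forall>x b b'. rhoud b b' x = rho (addB b b') x)) \<and>
     (ksk \<longrightarrow> (\<forall>x x' b. xiup x b x' = plusb x b (xi b x'))) \<and>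
     (ksone \<longrightarrow> (\<forall>x x' b b'. \<phi> x b x' b' = plusb x (addB b b') (xidown b' b x'))) \<and>
     (kks \<and> ksk \<longrightarrow> (\<forall>x x' b. xiup x b x' = rho b (plusX x (xi b x')))) \<and>
     (sks \<and> kss \<longrightarrow> (\<forall>x' b b'. xidown b' b x' = rho (addB b b') (xi b x'))) \<and>
     (oneks \<and> kss \<and> ksk \<longrightarrow>
        (\<forall>x x' b b'. \<phi> x b x' b' = rho (addB b b') (plusX x (xi b x')))) \<and>
     (ksone \<and> kks \<and> sks \<longrightarrow>
        (\<forall>x x' b b'. \<phi> x b x' b' = rho (addB b b') (plusX x (xi b x'))))"
proof -
  have uB: "\<And>b. addB b zB = b" "\<And>b. addB zB b = b"
    and uA: "\<And>a. addA a zA = a" "\<And>a. addA zA a = a"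
    and sm: "\<And>u v. s (addB u v) = addA (s u) (s v)" "s zB = zA"
    and pm: "\<And>u v. p (addA u v) = addB (p u) (p v)" "p zA = zB"
    and ps: "\<And>b. p (s b) = b" and qk: "\<And>x. q (k x) = x" and pk: "\<And>x. p (k x) = zB"
    and qs: "\<And>b. q (s b) = q zA" and dec: "\<And>a. addA (k (q a)) (s (p a)) = a"
    using RP unfolding retraction_point_def unitary_magma_def magma_morphism_def by auto
  have D1: "p c = b \<Longrightarrow> addA (k (q c)) (s b) = c" for c b using dec by metis
  have D2: "p c = zB \<Longrightarrow> k (q c) = c" for c using dec[of c] uA sm by metis
  note simps = uB uA sm pm ps qk pk D1 D2 phi_def \<phi>_def X0_def plusb_def xiup_def xidown_def
    rhoud_def plusX_def xi_def rho_def
  have c1: "kks \<longrightarrow> (\<forall>x x' b'. plusb x b' x' = rho b' (plusX x x'))"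
    unfolding kks_def by (simp add: simps)
  have c2: "sks \<longrightarrow> (\<forall>x' b b'. xidown b' b x' = rhoud b b' (xi b x'))"
    unfolding sks_def by (simp add: simps)
  have c3: "oneks \<longrightarrow> (\<forall>x x' b b'. \<phi> x b x' b' = rhoud b b' (xiup x b x'))"
    unfolding oneks_def by (simp add: simps)
  have c4: "kss \<longrightarrow> (\<forall>x b b'. rhoud b b' x = rho (addB b b') x)"
    unfolding kss_def by (simp add: simps)
  have c5: "ksk \<longrightarrow> (\<forall>x x' b. xiup x b x' = plusb x b (xi b x'))"
    unfolding ksk_def by (simp add: simps)
  have c6: "ksone \<longrightarrow> (\<forall>x x' b b'. \<phi> x b x' b' = plusb x (addB b b') (xidown b' b x'))"
    unfolding ksone_def by (simp add: simps del: sm(1))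
  have o2k: "oneks \<Longrightarrow> kks" unfolding oneks_def kks_def by blast
  have o2s: "ksone \<Longrightarrow> kss" unfolding ksone_def kss_def by blast
  have c7: "kks \<and> ksk \<longrightarrow> (\<forall>x x' b. xiup x b x' = rho b (plusX x (xi b x')))"
    using c1 c5 by simp
  have c8: "sks \<and> kss \<longrightarrow> (\<forall>x' b b'. xidown b' b x' = rho (addB b b') (xi b x'))"
    using c2 c4 by simp
  have c9: "oneks \<and> kss \<and> ksk \<longrightarrow>
        (\<forall>x x' b b'. \<phi> x b x' b' = rho (addB b b') (plusX x (xi b x')))"
  proof (intro impI allI)
    fix x x' b b'
    assume H: "oneks \<and> kss \<and> ksk"
    hence h1: "oneks" and h2: "kks" and h3: "ksk" and h4: kss using o2k by auto
    define c where "c = addA (s b) (k x')"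
    define d where "d = addA (k x) (k (q c))"
    have pc: "p c = b" by (simp add: c_def pm ps pk uB)
    have pd: "p d = zB" by (simp add: d_def pm pk uB)
    have kd: "k (q d) = d" using D2[OF pd] .
    have "rho (addB b b') (plusX x (xi b x')) = q (addA d (s (addB b b')))"
      using kd[unfolded d_def c_def]
      by (simp add: rho_def plusX_def xi_def \<phi>_def phi_def X0_def uA uB sm(2) pm D2 c_def d_def)
    also have "addA d (s (addB b b')) = addA (addA d (s b)) (s b')"
      using h4 kd unfolding kss_def sm by metis
    also have "addA d (s b) = addA (k x) c"
      using h2 D1[OF pc] unfolding kks_def d_def by metis
    also have "addA (k x) c = addA (addA (k x) (s b)) (k x')"
      using h3 unfolding ksk_def c_def by metis
    finally show "\<phi> x b x' b' = rho (addB b b') (plusX x (xi b x'))"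
      using h1 unfolding oneks_def \<phi>_def phi_def by simp
  qed
  have c10: "ksone \<and> kks \<and> sks \<longrightarrow>
        (\<forall>x x' b b'. \<phi> x b x' b' = rho (addB b b') (plusX x (xi b x')))"
  proof (intro impI allI)
    fix x x' b b'
    assume H: "ksone \<and> kks \<and> sks"
    hence h1: "ksone" and h2: "kks" and h3: "sks" and h4: kss using o2s by auto
    define c where "c = addA (s b) (k x')"
    define d where "d = addA (k x) (k (q c))"
    have pc: "p c = b" by (simp add: c_def pm ps pk uB)
    have pd: "p d = zB" by (simp add: d_def pm pk uB)
    have "rho (addB b b') (plusX x (xi b x')) = q (addA d (s (addB b b')))"
      using D2[OF pd, unfolded d_def c_def]
      by (simp add: rho_def plusX_def xi_def \<phi>_def phi_def X0_def uA uB sm(2) pm D2 c_def d_def)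
    also have "\<dots> = q (addA (k x) (addA (k (q c)) (s (addB b b'))))"
      using h2 unfolding kks_def d_def by simp
    also have "addA (k (q c)) (s (addB b b')) = addA c (s b')"
      using h4 D1[OF pc] unfolding kss_def sm by simp
    also have "\<dots> = addA (s b) (addA (k x') (s b'))"
      using h3 unfolding sks_def c_def by simp
    finally show "\<phi> x b x' b' = rho (addB b b') (plusX x (xi b x'))"
      using h1 unfolding ksone_def \<phi>_def phi_def by simp
  qed
  show ?thesis
    using c1 c2 c3 c4 c5 c6 c7 c8 c9 c10 by blast
qed

end
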